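(* Let $T:\mathbb{Z}^k\times X\to X$ be a continuous action on a compact metrizable space $X$ (not necessarily expansive), and let $d$ be a metric compatible with the topology with $\underline{\mathrm{mdim}}(X,T,d)<\infty$. Let $f:X\to X$ be a continuous map with $f\circ T^u=T^u\circ f$ for all $u\in\mathbb{Z}^k$ that is Lipschitz with respect to $d$, and let $L=\lim_{\varepsilon\to0}\sup_{0<d(x,y)<\varepsilon}d(f(x),f(y))/d(x,y)$. Then \[h_{\mathrm{top}}(T,f)\leq\log^+L\cdot\underline{\mathrm{mdim}}(X,T,d),\] where $\log^+L=\max(0,\log L)$ and $h_{\mathrm{top}}(T,f)$ is the topological entropy of the $\mathbb{Z}^k\times\mathbb{Z}_{\geq0}$-action generated by $T$ and $f$.
   Context: $\#(X,\rho,\varepsilon)$ is the minimal cardinality of an open cover of $X$ all of whose members have $\rho$-diameter $<\varepsilon$. For $\Omega\subset\mathbb{R}^k\times\mathbb{R}_{\geq0}$, $d_\Omega(x,y)=\sup_{(u,n)\in\Omega\cap(\mathbb{Z}^k\times\mathbb{Z}_{\geq0})}d(T^uf^nx,T^uf^ny)$, and for $\Omega\subset\mathbb{R}^k$, $d^T_\Omega(x,y)=\sup_{u\in\Omega\cap\mathbb{Z}^k}d(T^ux,T^uy)$. $S(X,T,d,\varepsilon)=\lim_{N\to\infty}\log\#(X,d^T_{[-N,N]^k},\varepsilon)/(2N+1)^k$ and $\underline{\mathrm{mdim}}(X,T,d)=\liminf_{\varepsilon\to0}S(X,T,d,\varepsilon)/\log(1/\varepsilon)$. $h_{\mathrm{top}}(T,f)=\lim_{\varepsilon\to0}S(X,(T,f),d,\varepsilon)$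 with $S(X,(T,f),d,\varepsilon)=\lim_{n,N\to\infty}\log\#(X,d_{[-N,N]^k\times[0,n]},\varepsilon)/((n+1)(2N+1)^k)$. *)

theory Defs
  imports "HOL-Analysis.Analysis"
begin

text \<open>Lattice points of the cube [-N,N]^k; Z^k is represented as 'k => int, k = CARD('k).\<close>
definition cube :: "nat \<Rightarrow> ('k::finite \<Rightarrow> int) set" where
  "cube N = {u. \<forall>i. \<bar>u i\<bar> \<le> int N}"

definition is_Zk_action :: "'a::metric_space set \<Rightarrow> (('k::finite \<Rightarrow> int) \<Rightarrow> 'a \<Rightarrow> 'a) \<Rightarrow> bool" where
  "is_Zk_action X T \<longleftrightarrow>
     (\<forall>u. T u ` X \<subseteq> X \<and> continuous_on X (T u)) \<and>
     (\<forall>x\<in>X. T (\<lambda>i. 0) x = x) \<and>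
     (\<forall>u v. \<forall>x\<in>X. T (\<lambda>i. u i + v i) x = T u (T v x))"

definition cov_num :: "'a::metric_space set \<Rightarrow> ('a \<Rightarrow> 'a \<Rightarrow> real) \<Rightarrow> real \<Rightarrow> nat" where
  "cov_num X \<rho> \<epsilon> = Inf {card \<U> | \<U>. finite \<U> \<and> X \<subseteq> \<Union>\<U> \<and>
      (\<forall>V\<in>\<U>. openin (top_of_set X) V \<and> (\<exists>\<delta><\<epsilon>. \<forall>x\<in>V. \<forall>y\<in>V. \<rho> x y \<le> \<delta>))}"

definition dyn_dist :: "(('k::finite \<Rightarrow> int) \<Rightarrow> 'a \<Rightarrow> 'a) \<Rightarrow> ('a \<Rightarrow> 'a) \<Rightarrow> nat \<Rightarrow> nat
    \<Rightarrow> 'a::metric_space \<Rightarrow> 'a \<Rightarrow> real" where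
  "dyn_dist T f N n x y =
     Max {dist (T u ((f ^^ m) x)) (T u ((f ^^ m) y)) | u m. u \<in> cube N \<and> m \<le> n}"

definition orbit_dist :: "(('k::finite \<Rightarrow> int) \<Rightarrow> 'a \<Rightarrow> 'a) \<Rightarrow> nat \<Rightarrow> 'a::metric_space \<Rightarrow> 'a \<Rightarrow> real" where
  "orbit_dist T N x y = Max {dist (T u x) (T u y) | u. u \<in> cube N}"

definition S_act :: "'a::metric_space set \<Rightarrow> (('k::finite \<Rightarrow> int) \<Rightarrow> 'a \<Rightarrow> 'a) \<Rightarrow> real \<Rightarrow> real" where
  "S_act X T \<epsilon> = lim (\<lambda>N. ln (real (cov_num X (orbit_dist T N) \<epsilon>)) / (2 * real N + 1) ^ CARD('k))"

definition lower_mdim :: "'a::metric_space set \<Rightarrow> (('k::finite \<Rightarrow> int) \<Rightarrow> 'a \<Rightarrow> 'a) \<Rightarrow> ereal" where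
  "lower_mdim X T = Liminf (at_right 0) (\<lambda>\<epsilon>. ereal (S_act X T \<epsilon> / ln (1 / \<epsilon>)))"

definition S_joint :: "'a::metric_space set \<Rightarrow> (('k::finite \<Rightarrow> int) \<Rightarrow> 'a \<Rightarrow> 'a) \<Rightarrow> ('a \<Rightarrow> 'a) \<Rightarrow> real \<Rightarrow> real" where
  "S_joint X T f \<epsilon> = Lim (sequentially \<times>\<^sub>F sequentially)
     (\<lambda>(n, N). ln (real (cov_num X (dyn_dist T f N n) \<epsilon>)) / ((real n + 1) * (2 * real N + 1) ^ CARD('k)))"

definition htop :: "'a::metric_space set \<Rightarrow> (('k::finite \<Rightarrow> int) \<Rightarrow> 'a \<Rightarrow> 'a) \<Rightarrow> ('a \<Rightarrow> 'a) \<Rightarrow> ereal" where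
  "htop X T f = Lim (at_right 0) (\<lambda>\<epsilon>. ereal (S_joint X T f \<epsilon>))"

text \<open>L = lim_{eps->0} sup_{0<d(x,y)<eps} d(fx,fy)/d(x,y); sup of the empty set is -infinity\<close>
definition local_lip :: "'a::metric_space set \<Rightarrow> ('a \<Rightarrow> 'a) \<Rightarrow> ereal" where
  "local_lip X f = Lim (at_right 0) (\<lambda>\<epsilon>.
     SUP p \<in> {(x, y). x \<in> X \<and> y \<in> X \<and> 0 < dist x y \<and> dist x y < \<epsilon>}.
       ereal (dist (f (fst p)) (f (snd p)) / dist (fst p) (snd p)))"

definition log_plus :: "ereal \<Rightarrow> ereal" where
  "log_plus L = (if L \<le> 1 then 0 else if L = \<infinity> then \<infinity> else ereal (ln (real_of_ereal L)))"

end

theory Submission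
  imports Defs
begin


definition covers :: "'a::metric_space set \<Rightarrow> ('a \<Rightarrow> 'a \<Rightarrow> real) \<Rightarrow> real \<Rightarrow> 'a set set set" where
  "covers X \<rho> \<epsilon> = {\<U>. finite \<U> \<and> X \<subseteq> \<Union>\<U> \<and>
      (\<forall>V\<in>\<U>. openin (top_of_set X) V \<and> (\<exists>\<delta><\<epsilon>. \<forall>x\<in>V. \<forall>y\<in>V. \<rho> x y \<le> \<delta>))}"

lemma cov_num_covers: "cov_num X \<rho> \<epsilon> = Inf (card ` covers X \<rho> \<epsilon>)"
  unfolding cov_num_def covers_def by (simp add: setcompr_eq_image)

lemma cov_num_le: "\<U> \<in> covers X \<rho> \<epsilon> \<Longrightarrow> cov_num X \<rho> \<epsilon> \<le> card \<U>"
  unfolding cov_num_covers by (simp add: cInf_lower)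

lemma cov_num_attained: "covers X \<rho> \<epsilon> \<noteq> {} \<Longrightarrow> \<exists>\<U>\<in>covers X \<rho> \<epsilon>. card \<U> = cov_num X \<rho> \<epsilon>"
  unfolding cov_num_covers using Inf_nat_def1[of "card ` covers X \<rho> \<epsilon>"] by auto

lemma cov_num_pos:
  assumes "X \<noteq> {}" "covers X \<rho> \<epsilon> \<noteq> {}"
  shows "1 \<le> cov_num X \<rho> \<epsilon>"
proof -
  obtain \<U> where U: "\<U> \<in> covers X \<rho> \<epsilon>" "card \<U> = cov_num X \<rho> \<epsilon>"
    using cov_num_attained[OF assms(2)] by blast
  then have "finite \<U>" "\<U> \<noteq> {}" using assms(1) unfolding covers_def by auto
  then show ?thesis using U(2) by (metis card_0_eq less_one not_less)
qed

lemma covers_exist: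
  fixes X :: "'a::metric_space set"
  assumes "compact X" "\<epsilon> > 0"
    and cont: "\<And>x. x \<in> X \<Longrightarrow> continuous_on X (\<rho> x)"
    and refl: "\<And>x. x \<in> X \<Longrightarrow> \<rho> x x = 0"
    and sym: "\<And>x y. x \<in> X \<Longrightarrow> y \<in> X \<Longrightarrow> \<rho> x y = \<rho> y x"
    and tri: "\<And>x y z. x \<in> X \<Longrightarrow> y \<in> X \<Longrightarrow> z \<in> X \<Longrightarrow> \<rho> x z \<le> \<rho> x y + \<rho> y z"
  shows "covers X \<rho> \<epsilon> \<noteq> {}"
proof -
  define B where "B x = X \<inter> \<rho> x -` {..<\<epsilon>/3}" for x
  have op: "openin (top_of_set X) (B x)" if "x \<in> X" for x
    unfolding B_def by (rule continuous_openin_preimage_gen[OF cont[OF that]]) auto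
  have "X \<subseteq> \<Union>(B ` X)" using refl assms(2) by (auto simp: B_def)
  then obtain D where D: "D \<subseteq> B ` X" "finite D" "X \<subseteq> \<Union>D"
  proof -
    have "\<forall>c\<in>B ` X. openin (top_of_set X) c" using op by blast
    then show ?thesis using that \<open>X \<subseteq> \<Union>(B ` X)\<close> assms(1) unfolding compact_eq_openin_cover by meson
  qed
  have "D \<in> covers X \<rho> \<epsilon>"
    unfolding covers_def
  proof (intro CollectI conjI ballI D)
    fix V assume "V \<in> D"
    then obtain x where x: "x \<in> X" "V = B x" using D(1) by auto
    show "openin (top_of_set X) V" using op x by simp
    show "\<exists>\<delta><\<epsilon>. \<forall>y\<in>V. \<forall>z\<in>V. \<rho> y z \<le> \<delta>"
    proof (intro exI[of _ "2*\<epsilon>/3"] conjI ballI)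
      fix y z assume "y \<in> V" "z \<in> V"
      then have "y \<in> X" "z \<in> X" "\<rho> x y < \<epsilon>/3" "\<rho> x z < \<epsilon>/3" using x by (auto simp: B_def)
      then show "\<rho> y z \<le> 2*\<epsilon>/3" using tri[of y x z] sym[of x y] x by linarith
    qed (use assms(2) in auto)
  qed
  then show ?thesis by blast
qed

lemma cov_num_mono:
  assumes ne: "covers X \<rho>2 \<epsilon>2 \<noteq> {}"
    and H: "\<And>\<delta>. \<delta> < \<epsilon>2 \<Longrightarrow> \<exists>\<delta>'<\<epsilon>1. \<forall>x\<in>X. \<forall>y\<in>X. \<rho>2 x y \<le> \<delta> \<longrightarrow> \<rho>1 x y \<le> \<delta>'"
  shows "cov_num X \<rho>1 \<epsilon>1 \<le> cov_num X \<rho>2 \<epsilon>2"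
proof -
  obtain \<U> where U: "\<U> \<in> covers X \<rho>2 \<epsilon>2" "card \<U> = cov_num X \<rho>2 \<epsilon>2"
    using cov_num_attained[OF ne] by blast
  have "\<U> \<in> covers X \<rho>1 \<epsilon>1"
    unfolding covers_def
  proof (intro CollectI conjI ballI)
    show "finite \<U>" "X \<subseteq> \<Union>\<U>" using U(1) by (auto simp: covers_def)
    fix V assume V: "V \<in> \<U>"
    then show "openin (top_of_set X) V" using U(1) by (auto simp: covers_def)
    then have VX: "V \<subseteq> X" by (rule openin_imp_subset)
    obtain \<delta> where d: "\<delta> < \<epsilon>2" "\<forall>x\<in>V. \<forall>y\<in>V. \<rho>2 x y \<le> \<delta>" using V U(1) by (auto simp: covers_def)
    obtain \<delta>' where "\<delta>' < \<epsilon>1" "\<forall>x\<in>X. \<forall>y\<in>X. \<rho>2 x y \<le> \<delta> \<longrightarrow> \<rho>1 x y \<le> \<delta>'" using H[OF d(1)] by blast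
    then show "\<exists>\<delta><\<epsilon>1. \<forall>x\<in>V. \<forall>y\<in>V. \<rho>1 x y \<le> \<delta>" using d(2) VX by blast
  qed
  then show ?thesis using cov_num_le U(2) by metis
qed

lemma cov_num_prod:
  assumes ne1: "covers X \<rho>1 \<epsilon> \<noteq> {}" and ne2: "covers X \<rho>2 \<epsilon> \<noteq> {}"
    and H: "\<And>x y. x \<in> X \<Longrightarrow> y \<in> X \<Longrightarrow> \<rho> x y \<le> max (\<rho>1 x y) (\<rho>2 x y)"
  shows "cov_num X \<rho> \<epsilon> \<le> cov_num X \<rho>1 \<epsilon> * cov_num X \<rho>2 \<epsilon>"
proof -
  obtain \<U> where U: "\<U> \<in> covers X \<rho>1 \<epsilon>" "card \<U> = cov_num X \<rho>1 \<epsilon>"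
    using cov_num_attained[OF ne1] by blast
  obtain \<V> where V: "\<V> \<in> covers X \<rho>2 \<epsilon>" "card \<V> = cov_num X \<rho>2 \<epsilon>"
    using cov_num_attained[OF ne2] by blast
  define g where "g = (\<lambda>p::'a set \<times> 'a set. fst p \<inter> snd p)"
  define \<W> where "\<W> = g ` (\<U> \<times> \<V>)"
  have Uc: "finite \<U>" "X \<subseteq> \<Union>\<U>" "\<And>A. A \<in> \<U> \<Longrightarrow> openin (top_of_set X) A \<and> (\<exists>\<delta><\<epsilon>. \<forall>x\<in>A. \<forall>y\<in>A. \<rho>1 x y \<le> \<delta>)"
    using U(1) unfolding covers_def by blast+
  have Vc: "finite \<V>" "X \<subseteq> \<Union>\<V>" "\<And>A. A \<in> \<V> \<Longrightarrow> openin (top_of_set X) A \<and> (\<exists>\<delta><\<epsilon>. \<forall>x\<in>A. \<forall>y\<in>A. \<rho>2 x y \<le> \<delta>)"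
    using V(1) unfolding covers_def by blast+
  have "\<W> \<in> covers X \<rho> \<epsilon>"
    unfolding covers_def
  proof (intro CollectI conjI ballI)
    show "finite \<W>" unfolding \<W>_def using Uc(1) Vc(1) by blast
    show "X \<subseteq> \<Union>\<W>"
    proof
      fix x assume x: "x \<in> X"
      then obtain A where A: "A \<in> \<U>" "x \<in> A" using Uc(2) by blast
      obtain B where B: "B \<in> \<V>" "x \<in> B" using Vc(2) x by blast
      have "g (A,B) \<in> \<W>" unfolding \<W>_def using A B by blast
      moreover have "x \<in> g (A,B)" using A B by (simp add: g_def)
      ultimately show "x \<in> \<Union>\<W>" by blast
    qed
    fix W assume "W \<in> \<W>"
    then obtain A B where AB: "A \<in> \<U>" "B \<in> \<V>" "W = A \<inter> B" unfolding \<W>_def g_def by force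
    have oA: "openin (top_of_set X) A" and oB: "openin (top_of_set X) B" using AB(1,2) Uc(3) Vc(3) by blast+
    then show "openin (top_of_set X) W" using AB(3) by (simp add: openin_Int)
    obtain d1 where d1: "d1 < \<epsilon>" "\<forall>x\<in>A. \<forall>y\<in>A. \<rho>1 x y \<le> d1" using AB(1) Uc(3) by blast
    obtain d2 where d2: "d2 < \<epsilon>" "\<forall>x\<in>B. \<forall>y\<in>B. \<rho>2 x y \<le> d2" using AB(2) Vc(3) by blast
    have AX: "A \<subseteq> X" using oA by (rule openin_imp_subset)
    have "max d1 d2 < \<epsilon>" using d1(1) d2(1) by simp
    moreover have "\<forall>x\<in>W. \<forall>y\<in>W. \<rho> x y \<le> max d1 d2"
    proof (intro ballI)
      fix x y assume "x \<in> W" "y \<in> W"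
      then have "x \<in> A" "y \<in> A" "x \<in> B" "y \<in> B" using AB(3) by auto
      then have "\<rho>1 x y \<le> d1" "\<rho>2 x y \<le> d2" "x \<in> X" "y \<in> X" using d1(2) d2(2) AX by auto
      then show "\<rho> x y \<le> max d1 d2" using H[of x y] by linarith
    qed
    ultimately show "\<exists>\<delta><\<epsilon>. \<forall>x\<in>W. \<forall>y\<in>W. \<rho> x y \<le> \<delta>" by blast
  qed
  then have "cov_num X \<rho> \<epsilon> \<le> card \<W>" by (rule cov_num_le)
  also have "\<dots> \<le> card (\<U> \<times> \<V>)" unfolding \<W>_def using Uc(1) Vc(1) by (intro card_image_le) auto
  also have "\<dots> = cov_num X \<rho>1 \<epsilon> * cov_num X \<rho>2 \<epsilon>" using U(2) V(2) by (simp add: card_cartesian_product)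
  finally show ?thesis .
qed

lemma cov_num_pullback:
  assumes ne: "covers X \<rho>2 \<epsilon> \<noteq> {}" and cont: "continuous_on X \<Phi>" and im: "\<Phi> ` X \<subseteq> X"
    and H: "\<And>x y. x \<in> X \<Longrightarrow> y \<in> X \<Longrightarrow> \<rho>1 x y \<le> \<rho>2 (\<Phi> x) (\<Phi> y)"
  shows "cov_num X \<rho>1 \<epsilon> \<le> cov_num X \<rho>2 \<epsilon>"
proof -
  obtain \<U> where U: "\<U> \<in> covers X \<rho>2 \<epsilon>" "card \<U> = cov_num X \<rho>2 \<epsilon>"
    using cov_num_attained[OF ne] by blast
  define \<W> where "\<W> = (\<lambda>A. X \<inter> \<Phi> -` A) ` \<U>"
  have fin: "finite \<U>" using U by (auto simp: covers_def)
  have "\<W> \<in> covers X \<rho>1 \<epsilon>"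
    unfolding covers_def
  proof (intro CollectI conjI ballI)
    show "finite \<W>" using fin by (simp add: \<W>_def)
    show "X \<subseteq> \<Union>\<W>"
    proof
      fix x assume x: "x \<in> X"
      then have "\<Phi> x \<in> X" using im by auto
      then obtain A where "A \<in> \<U>" "\<Phi> x \<in> A" using U(1) unfolding covers_def by blast
      then show "x \<in> \<Union>\<W>" unfolding \<W>_def using x by blast
    qed
    fix W assume "W \<in> \<W>"
    then obtain A where A: "A \<in> \<U>" "W = X \<inter> \<Phi> -` A" by (auto simp: \<W>_def)
    have oA: "openin (top_of_set X) A" using A U(1) by (auto simp: covers_def)
    show "openin (top_of_set X) W" unfolding A(2)
      by (rule continuous_openin_preimage[OF cont _ oA]) (use im in auto)
    obtain d where d: "d < \<epsilon>" "\<forall>x\<in>A. \<forall>y\<in>A. \<rho>2 x y \<le> d" using A U(1) by (auto simp: covers_def)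
    show "\<exists>\<delta><\<epsilon>. \<forall>x\<in>W. \<forall>y\<in>W. \<rho>1 x y \<le> \<delta>"
    proof (intro exI[of _ d] conjI ballI)
      fix x y assume "x \<in> W" "y \<in> W"
      then have "\<Phi> x \<in> A" "\<Phi> y \<in> A" "x \<in> X" "y \<in> X" using A by auto
      then have "\<rho>2 (\<Phi> x) (\<Phi> y) \<le> d" using d(2) by blast
      then show "\<rho>1 x y \<le> d" using H[of x y] \<open>x \<in> X\<close> \<open>y \<in> X\<close> by linarith
    qed (use d in auto)
  qed
  then have "cov_num X \<rho>1 \<epsilon> \<le> card \<W>" by (rule cov_num_le)
  also have "\<dots> \<le> card \<U>" unfolding \<W>_def using fin by (intro card_image_le) auto
  finally show ?thesis using U by simp
qed



definition DD :: "(('k::finite \<Rightarrow> int) \<Rightarrow> 'a \<Rightarrow> 'a) \<Rightarrow> ('a \<Rightarrow> 'a) \<Rightarrow> (('k \<Rightarrow> int) \<times> nat) set \<Rightarrow> 'a::metric_space \<Rightarrow> 'a \<Rightarrow> real" where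
  "DD T f F x y = Max ((\<lambda>p. dist (T (fst p) ((f^^snd p) x)) (T (fst p) ((f^^snd p) y))) ` F)"

definition bx :: "nat \<Rightarrow> nat \<Rightarrow> (('k::finite \<Rightarrow> int) \<times> nat) set" where
  "bx N n = cube N \<times> {..n}"

definition trn :: "('k::finite \<Rightarrow> int) \<times> nat \<Rightarrow> (('k \<Rightarrow> int) \<times> nat) set \<Rightarrow> (('k \<Rightarrow> int) \<times> nat) set" where
  "trn t F = (\<lambda>p. (\<lambda>i. fst p i + fst t i, snd p + snd t)) ` F"

lemma cube_PiE: "cube N = (PiE UNIV (\<lambda>_. {-int N..int N}) :: ('k::finite \<Rightarrow> int) set)"
proof -
  have "\<And>u::'k\<Rightarrow>int. (\<forall>i. \<bar>u i\<bar> \<le> int N) \<longleftrightarrow> (\<forall>i. u i \<in> {-int N..int N})" 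
  proof -
    have "\<And>z::int. \<bar>z\<bar> \<le> int N \<longleftrightarrow> z \<in> {-int N..int N}" by auto
    then show "\<And>u::'k\<Rightarrow>int. (\<forall>i. \<bar>u i\<bar> \<le> int N) \<longleftrightarrow> (\<forall>i. u i \<in> {-int N..int N})" by presburger
  qed
  then show ?thesis by (simp add: cube_def PiE_UNIV_domain Pi_def)
qed

lemma finite_cube: "finite (cube N)"
  unfolding cube_PiE by (intro finite_PiE) auto

lemma card_cube: "card (cube N :: ('k::finite \<Rightarrow> int) set) = (2*N+1) ^ CARD('k)"
proof -
  have "nat (2 * int N + 1) = 2*N+1" by simp
  then show ?thesis unfolding cube_PiE by (simp add: card_PiE)
qed

lemma zero_cube: "(\<lambda>i. 0) \<in> cube N"
  by (simp add: cube_def)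

lemma finite_bx: "finite (bx N n)" by (simp add: bx_def finite_cube)
lemma bx_ne: "bx N n \<noteq> {}" using zero_cube by (auto simp: bx_def)

lemma card_bx: "card (bx N n :: (('k::finite \<Rightarrow> int) \<times> nat) set) = (2*N+1) ^ CARD('k) * (n+1)"
  by (simp add: bx_def card_cartesian_product card_cube finite_cube)

lemma dyn_dist_DD: "dyn_dist T f N n = DD T f (bx N n)"
proof (intro ext)
  fix x y
  have "{dist (T u ((f ^^ m) x)) (T u ((f ^^ m) y)) | u m. u \<in> cube N \<and> m \<le> n}
     = (\<lambda>p. dist (T (fst p) ((f^^snd p) x)) (T (fst p) ((f^^snd p) y))) ` bx N n" (is "?A = ?B")
  proof (intro set_eqI iffI)
    fix z assume "z \<in> ?A"
    then obtain u m where "z = dist (T u ((f ^^ m) x)) (T u ((f ^^ m) y))" "u \<in> cube N" "m \<le> n" by blast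
    then show "z \<in> ?B" by (intro image_eqI[where x="(u,m)"]) (auto simp: bx_def)
  next
    fix z assume "z \<in> ?B"
    then obtain u m where "(u,m) \<in> bx N n" "z = dist (T u ((f ^^ m) x)) (T u ((f ^^ m) y))" by auto
    then show "z \<in> ?A" by (auto simp: bx_def)
  qed
  then show "dyn_dist T f N n x y = DD T f (bx N n) x y" by (simp add: dyn_dist_def DD_def)
qed

lemma orbit_dist_DD: "orbit_dist T N = DD T f (bx N 0)"
proof (intro ext)
  fix x y
  have "{dist (T u x) (T u y) | u. u \<in> cube N}
     = (\<lambda>p. dist (T (fst p) ((f^^snd p) x)) (T (fst p) ((f^^snd p) y))) ` bx N 0" (is "?A = ?B")
  proof (intro set_eqI iffI)
    fix z assume "z \<in> ?A"
    then obtain u where "z = dist (T u x) (T u y)" "u \<in> cube N" by blast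
    then show "z \<in> ?B" by (intro image_eqI[where x="(u,0)"]) (auto simp: bx_def)
  next
    fix z assume "z \<in> ?B"
    then obtain u m where "(u,m) \<in> bx N 0" "z = dist (T u ((f ^^ m) x)) (T u ((f ^^ m) y))" by auto
    then show "z \<in> ?A" by (auto simp: bx_def)
  qed
  then show "orbit_dist T N x y = DD T f (bx N 0) x y" by (simp add: orbit_dist_def DD_def)
qed

locale sys =
  fixes X :: "'a::metric_space set" and T :: "('k::finite \<Rightarrow> int) \<Rightarrow> 'a \<Rightarrow> 'a" and f :: "'a \<Rightarrow> 'a"
  assumes cpt: "compact X" and ne: "X \<noteq> {}" and act: "is_Zk_action X T"
    and fX: "f ` X \<subseteq> X" and fc: "continuous_on X f"
    and comm: "\<forall>u. \<forall>x\<in>X. f (T u x) = T u (f x)"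
begin

abbreviation cv where "cv F \<epsilon> \<equiv> cov_num X (DD T f F) \<epsilon>"

lemma TX: "x \<in> X \<Longrightarrow> T u x \<in> X" using act unfolding is_Zk_action_def by blast
lemma Tc: "continuous_on X (T u)" using act unfolding is_Zk_action_def by blast
lemma Tadd: "x \<in> X \<Longrightarrow> T (\<lambda>i. u i + v i) x = T u (T v x)"
  using act unfolding is_Zk_action_def by blast

lemma fpX: "x \<in> X \<Longrightarrow> (f^^m) x \<in> X"
  by (induction m) (use fX in auto)

lemma fpc: "continuous_on X (f^^m)"
proof (induction m)
  case 0 then show ?case by (simp add: continuous_on_id)
next
  case (Suc m)
  have "continuous_on X (f \<circ> (f^^m))"
    by (rule continuous_on_compose[OF Suc]) (rule continuous_on_subset[OF fc], use fpX in auto)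
  then show ?case by simp
qed

lemma fp_comm: "x \<in> X \<Longrightarrow> (f^^m) (T v x) = T v ((f^^m) x)"
proof (induction m)
  case 0 then show ?case by simp
next
  case (Suc m)
  then show ?case using comm fpX[OF Suc.prems] by simp
qed

lemma Phi_c: "continuous_on X (\<lambda>x. T u ((f^^m) x))"
proof -
  have "continuous_on X (T u \<circ> (f^^m))"
    by (rule continuous_on_compose[OF fpc]) (rule continuous_on_subset[OF Tc], use fpX in auto)
  then show ?thesis by (simp add: o_def)
qed

lemma Phi_X: "x \<in> X \<Longrightarrow> T u ((f^^m) x) \<in> X" using TX fpX by blast

context
  fixes F :: "(('k \<Rightarrow> int) \<times> nat) set"
  assumes Ffin: "finite F" and Fne: "F \<noteq> {}"
begin

lemma DD_ge: "p \<in> F \<Longrightarrow> dist (T (fst p) ((f^^snd p) x)) (T (fst p) ((f^^snd p) y)) \<le> DD T f F x y"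
  unfolding DD_def using Ffin by (intro Max_ge) auto

lemma DD_le: "(\<And>p. p \<in> F \<Longrightarrow> dist (T (fst p) ((f^^snd p) x)) (T (fst p) ((f^^snd p) y)) \<le> c) \<Longrightarrow> DD T f F x y \<le> c"
  unfolding DD_def using Ffin Fne by (subst Max_le_iff) auto

lemma DD_nonneg: "0 \<le> DD T f F x y"
proof -
  obtain p where "p \<in> F" using Fne by blast
  then show ?thesis using DD_ge[of p x y] zero_le_dist order_trans by blast
qed

lemma DD_refl: "DD T f F x x = 0"
  using DD_le[of x x 0] DD_nonneg[of x x] by simp

lemma DD_sym: "DD T f F x y = DD T f F y x"
  unfolding DD_def by (simp add: dist_commute)

lemma DD_tri: "DD T f F x z \<le> DD T f F x y + DD T f F y z"
proof (rule DD_le)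
  fix p assume p: "p \<in> F"
  show "dist (T (fst p) ((f^^snd p) x)) (T (fst p) ((f^^snd p) z)) \<le> DD T f F x y + DD T f F y z"
    using dist_triangle[of "T (fst p) ((f^^snd p) x)" "T (fst p) ((f^^snd p) z)" "T (fst p) ((f^^snd p) y)"]
      DD_ge[OF p, of x y] DD_ge[OF p, of y z] by linarith
qed

lemma DD_cont: "continuous_on X (DD T f F x)"
proof -
  have "continuous_on X (\<lambda>y. Max ((\<lambda>p. dist (T (fst p) ((f^^snd p) x)) (T (fst p) ((f^^snd p) y))) ` G))"
    if "finite G" "G \<noteq> {}" for G
    using that
  proof (induction G rule: finite_ne_induct)
    case (singleton p)
    then show ?case by (simp add: continuous_on_dist continuous_on_const Phi_c)
  next
    case (insert p G)
    then show ?case by (simp add: continuous_on_max continuous_on_dist continuous_on_const Phi_c)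
  qed
  then show ?thesis unfolding DD_def[abs_def] using Ffin Fne by blast
qed

lemma covers_DD: "\<epsilon> > 0 \<Longrightarrow> covers X (DD T f F) \<epsilon> \<noteq> {}"
  by (rule covers_exist[OF cpt]) (auto intro: DD_cont DD_refl DD_sym DD_tri)

lemma cv_pos: "\<epsilon> > 0 \<Longrightarrow> 1 \<le> cv F \<epsilon>"
  by (rule cov_num_pos[OF ne covers_DD])

end

lemma DD_mono: "finite G \<Longrightarrow> F \<subseteq> G \<Longrightarrow> F \<noteq> {} \<Longrightarrow> DD T f F x y \<le> DD T f G x y"
  unfolding DD_def by (intro Max_mono) auto

lemma cv_mono: "finite G \<Longrightarrow> F \<subseteq> G \<Longrightarrow> F \<noteq> {} \<Longrightarrow> \<epsilon> > 0 \<Longrightarrow> cv F \<epsilon> \<le> cv G \<epsilon>"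
proof -
  assume a: "finite G" "F \<subseteq> G" "F \<noteq> {}" "\<epsilon> > 0"
  have "G \<noteq> {}" using a by auto
  show ?thesis
  proof (rule cov_num_mono[OF covers_DD[OF a(1) \<open>G \<noteq> {}\<close> a(4)]])
    fix \<delta> assume "\<delta> < \<epsilon>"
    then show "\<exists>\<delta>'<\<epsilon>. \<forall>x\<in>X. \<forall>y\<in>X. DD T f G x y \<le> \<delta> \<longrightarrow> DD T f F x y \<le> \<delta>'"
      using DD_mono[OF a(1-3)] by (meson order_trans)
  qed
qed

lemma DD_Un: "finite F \<Longrightarrow> finite G \<Longrightarrow> F \<noteq> {} \<Longrightarrow> G \<noteq> {} \<Longrightarrow> DD T f (F \<union> G) x y = max (DD T f F x y) (DD T f G x y)"
  unfolding DD_def image_Un by (simp add: Max_Un)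

lemma cv_Un: "finite F \<Longrightarrow> finite G \<Longrightarrow> F \<noteq> {} \<Longrightarrow> G \<noteq> {} \<Longrightarrow> \<epsilon> > 0 \<Longrightarrow> cv (F \<union> G) \<epsilon> \<le> cv F \<epsilon> * cv G \<epsilon>"
  by (rule cov_num_prod[OF covers_DD covers_DD]) (auto simp: DD_Un)

lemma DD_trn: "x \<in> X \<Longrightarrow> y \<in> X \<Longrightarrow> DD T f (trn (v,j) F) x y = DD T f F (T v ((f^^j) x)) (T v ((f^^j) y))"
proof -
  assume x: "x \<in> X" and y: "y \<in> X"
  have *: "T (\<lambda>k. u k + v k) ((f^^(i + j)) z) = T u ((f^^i) (T v ((f^^j) z)))" if "z \<in> X" for z u i
    using that by (simp add: funpow_add Tadd fpX fp_comm)
  show ?thesis unfolding DD_def trn_def image_image using * x y by simp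
qed

lemma finite_trn: "finite F \<Longrightarrow> finite (trn t F)" by (simp add: trn_def)
lemma trn_ne: "F \<noteq> {} \<Longrightarrow> trn t F \<noteq> {}" by (simp add: trn_def)

lemma cv_trn: "finite F \<Longrightarrow> F \<noteq> {} \<Longrightarrow> \<epsilon> > 0 \<Longrightarrow> cv (trn t F) \<epsilon> \<le> cv F \<epsilon>"
proof -
  assume a: "finite F" "F \<noteq> {}" "\<epsilon> > 0"
  obtain v j where t: "t = (v,j)" by (cases t)
  show ?thesis unfolding t
    by (rule cov_num_pullback[OF covers_DD[OF a] Phi_c[of v j]]) (auto simp: Phi_X DD_trn)
qed

lemma cv_UN:
  assumes "finite I" "I \<noteq> {}" "\<And>i. i \<in> I \<Longrightarrow> finite (F i) \<and> F i \<noteq> {} \<and> cv (F i) \<epsilon> \<le> c" "\<epsilon> > 0"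
  shows "cv (\<Union>i\<in>I. F i) \<epsilon> \<le> c ^ card I"
  using assms(1,2,3)
proof (induction I rule: finite_ne_induct)
  case (singleton i) then show ?case by simp
next
  case (insert i I)
  have fin: "finite (\<Union>i\<in>I. F i)" and nem: "(\<Union>i\<in>I. F i) \<noteq> {}" using insert by auto
  have "cv (\<Union>i\<in>insert i I. F i) \<epsilon> = cv (F i \<union> (\<Union>i\<in>I. F i)) \<epsilon>" by simp
  also have "\<dots> \<le> cv (F i) \<epsilon> * cv (\<Union>i\<in>I. F i) \<epsilon>"
    using insert.prems fin nem assms(4) by (intro cv_Un) auto
  also have "\<dots> \<le> c * c ^ card I"
    using insert by (intro mult_le_mono) auto
  finally show ?case using insert by simp
qed

end


lemma mult_less_cancel_pos_int: "0 < (S::int) \<Longrightarrow> S * x < S * y \<Longrightarrow> x < y"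
  by (simp add: mult_less_cancel_left)

lemma tile_cover:
  fixes N n M m :: nat
  defines "s \<equiv> 2*M+1" and "R \<equiv> N div (2*M+1) + 1" and "J \<equiv> n div (m+1) + 1"
  shows "(bx N n :: (('k::finite \<Rightarrow> int) \<times> nat) set) \<subseteq>
     (\<Union>q\<in>cube R \<times> {..<J}. trn (\<lambda>i. int s * fst q i, (m+1) * snd q) (bx M m))"
proof
  fix p :: "('k \<Rightarrow> int) \<times> nat" assume p: "p \<in> bx N n"
  obtain u i where pu: "p = (u,i)" by (cases p)
  have ub: "\<And>k. \<bar>u k\<bar> \<le> int N" and ib: "i \<le> n" using p pu by (auto simp: bx_def cube_def)
  define S where "S = int s"
  have S0: "S > 0" by (simp add: S_def s_def)
  have Sv: "S = 2 * int M + 1" by (simp add: S_def s_def)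
  define w where "w = (\<lambda>k. (u k + int M) div S)"
  define r where "r = (\<lambda>k. u k - S * w k)"
  define j where "j = i div (m+1)"
  define t where "t = i mod (m+1)"
  have NR: "int N < S * int R"
  proof -
    have "N < s * (N div s + 1)" using s_def
      by (metis add_gr_0 div_mult_mod_eq distrib_left less_numeral_extra(1) mod_less_divisor mult.commute mult_1 nat_add_left_cancel_less)
    then have "int N < int s * int (N div s + 1)" by (metis of_nat_less_iff of_nat_mult)
    then show ?thesis unfolding S_def R_def s_def by simp
  qed
  have r_eq: "r k = (u k + int M) mod S - int M" for k
    unfolding r_def w_def using minus_div_mult_eq_mod[of "u k + int M" S] by (simp add: algebra_simps)
  have rb: "\<bar>r k\<bar> \<le> int M" for k
  proof -
    have "0 \<le> (u k + int M) mod S" "(u k + int M) mod S < S" using S0 by auto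
    moreover have "S = 2 * int M + 1" by (simp add: S_def s_def)
    ultimately show ?thesis unfolding r_eq abs_le_iff by linarith
  qed
  have wb: "\<bar>w k\<bar> \<le> int R" for k
  proof -
    have a1: "S * w k \<le> u k + int M" and a2: "u k + int M < S * w k + S"
      using rb[of k] Sv unfolding r_def abs_le_iff by linarith+
    have "S * (w k - 1) < S * int R" using a1 ub[of k] NR by (simp add: algebra_simps S_def s_def abs_le_iff)
    then have "w k - 1 < int R" by (rule mult_less_cancel_pos_int[OF S0])
    moreover have "S * (- w k - 1) < S * int R" using a2 ub[of k] NR by (simp add: algebra_simps S_def s_def abs_le_iff)
    then have "- w k - 1 < int R" by (rule mult_less_cancel_pos_int[OF S0])
    ultimately show ?thesis by simp
  qed
  have "(w, j) \<in> cube R \<times> {..<J}"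
    using wb ib unfolding cube_def j_def J_def by (auto simp: less_Suc_eq_le div_le_mono)
  moreover have "(r, t) \<in> bx M m" using rb unfolding bx_def cube_def t_def by auto
  moreover have "p = (\<lambda>k. r k + int s * w k, t + (m+1) * j)"
  proof -
    have "i = t + (m+1)*j" unfolding t_def j_def by (simp only: mod_mult_div_eq)
    moreover have "u = (\<lambda>k. r k + int s * w k)" unfolding r_def S_def by simp
    ultimately show ?thesis using pu by simp
  qed
  ultimately show "p \<in> (\<Union>q\<in>cube R \<times> {..<J}. trn (\<lambda>i. int s * fst q i, (m+1) * snd q) (bx M m))"
    unfolding trn_def by force
qed


lemma card_tiles: "card (cube R \<times> {..<J} :: (('k::finite \<Rightarrow> int) \<times> nat) set) = (2*R+1) ^ CARD('k) * J"
  by (simp add: card_cartesian_product card_cube finite_cube)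

context sys begin

definition aa :: "real \<Rightarrow> nat \<Rightarrow> nat \<Rightarrow> real" where
  "aa \<epsilon> n N = ln (real (cv (bx N n) \<epsilon>)) / ((real n + 1) * (2 * real N + 1) ^ CARD('k))"

lemma aa_nonneg: "\<epsilon> > 0 \<Longrightarrow> 0 \<le> aa \<epsilon> n N"
  unfolding aa_def using cv_pos[OF finite_bx bx_ne] by simp

lemma cv_tile:
  assumes "\<epsilon> > 0"
  shows "cv (bx N n) \<epsilon> \<le> cv (bx M m) \<epsilon> ^ ((2*(N div (2*M+1) + 1)+1) ^ CARD('k) * (n div (m+1) + 1))"
proof -
  define R where "R = N div (2*M+1) + 1"
  define J where "J = n div (m+1) + 1"
  define I where "I = (cube R \<times> {..<J} :: (('k \<Rightarrow> int) \<times> nat) set)"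
  define F where "F = (\<lambda>q::('k \<Rightarrow> int) \<times> nat. trn (\<lambda>i. int (2*M+1) * fst q i, (m+1) * snd q) (bx M m))"
  have I: "finite I" "I \<noteq> {}" using zero_cube by (auto simp: I_def finite_cube J_def)
  have Ffin: "finite (\<Union>q\<in>I. F q)" using I by (simp add: F_def finite_trn finite_bx)
  have sub: "bx N n \<subseteq> (\<Union>q\<in>I. F q)" unfolding I_def F_def R_def J_def by (rule tile_cover)
  have "cv (bx N n) \<epsilon> \<le> cv (\<Union>q\<in>I. F q) \<epsilon>" by (rule cv_mono[OF Ffin sub bx_ne assms])
  also have "\<dots> \<le> cv (bx M m) \<epsilon> ^ card I"
    by (rule cv_UN[OF I]) (auto simp: F_def finite_trn finite_bx trn_ne bx_ne cv_trn assms)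
  finally show ?thesis unfolding I_def card_tiles R_def J_def .
qed

lemma aa_tile:
  assumes "\<epsilon> > 0"
  shows "aa \<epsilon> n N \<le> aa \<epsilon> m M * (((2 * real N + 3 * (2 * real M + 1)) / (2 * real N + 1)) ^ CARD('k) * ((real n + real m + 1) / (real n + 1)))"
proof -
  define sM where "sM = 2*M+1"
  define R where "R = N div sM + 1"
  define J where "J = n div (m+1) + 1"
  define K where "K = (2*R+1) ^ CARD('k) * J"
  define c0 where "c0 = cv (bx M m) \<epsilon>"
  define g0 where "g0 = ln (real c0)"
  have c0: "1 \<le> c0" unfolding c0_def by (rule cv_pos[OF finite_bx bx_ne assms])
  have g0: "0 \<le> g0" using c0 by (simp add: g0_def)
  have "cv (bx N n) \<epsilon> \<le> c0 ^ K" unfolding c0_def K_def R_def J_def sM_def by (rule cv_tile[OF assms])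
  then have "ln (real (cv (bx N n) \<epsilon>)) \<le> ln (real c0 ^ K)"
    using cv_pos[OF finite_bx bx_ne assms, of N n] c0 by (subst ln_le_cancel_iff) (auto simp flip: of_nat_power)
  also have "\<dots> = real K * g0" using c0 by (simp add: ln_realpow g0_def)
  finally have lnb: "ln (real (cv (bx N n) \<epsilon>)) \<le> real K * g0" .
  have Rs: "(2*R+1) * sM \<le> 2*N + 3* sM"
  proof -
    have "sM * (N div sM) \<le> N" by simp
    then show ?thesis unfolding R_def by (simp add: algebra_simps)
  qed
  have Jm: "J * (m+1) \<le> n + m + 1"
  proof -
    have h: "(n div (m+1)) * (m+1) \<le> n" by (rule div_times_less_eq_dividend)
    have "J * (m+1) = (n div (m+1)) * (m+1) + (m+1)" unfolding J_def by (simp only: add_mult_distrib mult_1)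
    then show ?thesis using h by linarith
  qed
  have "K * (m+1) * sM ^ CARD('k) = ((2*R+1) * sM) ^ CARD('k) * (J * (m+1))"
    unfolding K_def power_mult_distrib by (simp only: mult.assoc mult.commute mult.left_commute)
  also have "\<dots> \<le> (2*N + 3* sM) ^ CARD('k) * (n + m + 1)"
    by (intro mult_le_mono power_mono Rs Jm) simp
  finally have Kb: "real K * (real m + 1) * real sM ^ CARD('k) \<le> (2 * real N + 3 * real sM) ^ CARD('k) * (real n + real m + 1)"
    by (metis (mono_tags, lifting) of_nat_le_iff of_nat_mult of_nat_power of_nat_add of_nat_1 of_nat_numeral)
  define D where "D = (real n + 1) * (2 * real N + 1) ^ CARD('k)"
  have D: "D > 0" by (simp add: D_def)
  have sp: "real sM ^ CARD('k) > 0" by (simp add: sM_def)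
  have "aa \<epsilon> n N \<le> real K * g0 / D" unfolding aa_def D_def[symmetric]
    using lnb D by (simp add: divide_right_mono)
  also have "\<dots> = (real K * (real m + 1) * real sM ^ CARD('k)) * (g0 / ((real m + 1) * real sM ^ CARD('k) * D))"
  proof -
    define q where "q = (real m + 1) * real sM ^ CARD('k)"
    have q: "q > 0" using sp by (simp add: q_def)
    have "real K * g0 / D = (real K * q) * (g0 / (q * D))" using q D by (simp add: field_simps)
    then show ?thesis by (simp add: q_def mult.assoc)
  qed
  also have "\<dots> \<le> ((2 * real N + 3 * real sM) ^ CARD('k) * (real n + real m + 1)) * (g0 / ((real m + 1) * real sM ^ CARD('k) * D))"
    using Kb g0 D sp by (intro mult_right_mono) auto
  also have "\<dots> = aa \<epsilon> m M * (((2 * real N + 3 * (2 * real M + 1)) / (2 * real N + 1)) ^ CARD('k) * ((real n + real m + 1) / (real n + 1)))"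
    unfolding aa_def g0_def c0_def D_def sM_def using sp
    by (simp add: field_simps power_divide)
  finally show ?thesis .
qed

end



lemma lim_ratio1: "((\<lambda>N::nat. ((2 * real N + c) / (2 * real N + 1)) ^ k) \<longlongrightarrow> 1) sequentially"
proof -
  have at: "filterlim (\<lambda>N::nat. 2 * real N + 1) at_top sequentially"
  proof -
    have "filterlim (\<lambda>N::nat. 2 * real N) at_top sequentially"
      by (rule filterlim_tendsto_pos_mult_at_top[OF tendsto_const _ filterlim_real_sequentially]) simp
    then have "filterlim (\<lambda>N::nat. 1 + 2 * real N) at_top sequentially"
      by (rule filterlim_tendsto_add_at_top[OF tendsto_const])
    then show ?thesis by (simp add: add.commute)
  qed
  have "((\<lambda>N::nat. (c - 1) / (2 * real N + 1)) \<longlongrightarrow> 0) sequentially"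
    by (rule tendsto_divide_0[OF tendsto_const filterlim_at_top_imp_at_infinity[OF at]])
  then have "((\<lambda>N::nat. 1 + (c - 1) / (2 * real N + 1)) \<longlongrightarrow> 1 + 0) sequentially"
    by (intro tendsto_add tendsto_const)
  then have "((\<lambda>N::nat. (1 + (c - 1) / (2 * real N + 1)) ^ k) \<longlongrightarrow> (1 + 0) ^ k) sequentially"
    by (intro tendsto_power)
  moreover have "(1 + (c - 1) / (2 * real N + 1)) = (2 * real N + c) / (2 * real N + 1)" for N :: nat
    by (simp add: field_simps)
  ultimately show ?thesis by simp
qed

lemma lim_ratio2: "((\<lambda>n::nat. (real n + a + 1) / (real n + 1)) \<longlongrightarrow> 1) sequentially"
proof -
  have at: "filterlim (\<lambda>n::nat. real n + 1) at_top sequentially"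
  proof -
    have "filterlim (\<lambda>n::nat. 1 + real n) at_top sequentially"
      by (rule filterlim_tendsto_add_at_top[OF tendsto_const filterlim_real_sequentially])
    then show ?thesis by (simp add: add.commute)
  qed
  have "((\<lambda>n::nat. a / (real n + 1)) \<longlongrightarrow> 0) sequentially"
    by (rule tendsto_divide_0[OF tendsto_const filterlim_at_top_imp_at_infinity[OF at]])
  then have "((\<lambda>n::nat. 1 + a / (real n + 1)) \<longlongrightarrow> 1 + 0) sequentially"
    by (intro tendsto_add tendsto_const)
  moreover have "1 + a / (real n + 1) = (real n + a + 1) / (real n + 1)" for n :: nat
    by (simp add: field_simps)
  ultimately show ?thesis by simp
qed

context sys begin

lemma aa_joint_lim:
  assumes e: "\<epsilon> > 0"
  shows "((\<lambda>p. aa \<epsilon> (fst p) (snd p)) \<longlongrightarrow> (INF p. aa \<epsilon> (fst p) (snd p))) (sequentially \<times>\<^sub>F sequentially)"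
proof -
  define a where "a = (\<lambda>p. aa \<epsilon> (fst p) (snd p))"
  have bdd: "bdd_below (range a)" using aa_nonneg[OF e] unfolding a_def by (intro bdd_belowI[of _ 0]) auto
  have "(a \<longlongrightarrow> (INF p. a p)) (sequentially \<times>\<^sub>F sequentially)"
  proof (rule order_tendstoI)
    fix y assume "y < (INF p. a p)"
    then have "\<forall>p. y < a p" using cINF_lower[OF bdd] by (meson UNIV_I less_le_trans)
    then show "eventually (\<lambda>p. y < a p) (sequentially \<times>\<^sub>F sequentially)" by (intro always_eventually) blast
  next
    fix y assume y: "(INF p. a p) < y"
    then obtain p0 where p0: "a p0 < y" using cINF_less_iff[OF UNIV_not_empty bdd] by auto
    obtain m M where pm: "p0 = (m, M)" by (cases p0)
    define \<rho> where "\<rho> = (\<lambda>p::nat\<times>nat. ((2 * real (snd p) + 3 * (2 * real M + 1)) / (2 * real (snd p) + 1)) ^ CARD('k) * ((real (fst p) + real m + 1) / (real (fst p) + 1)))"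
    have l1: "((\<lambda>p::nat\<times>nat. ((2 * real (snd p) + 3 * (2 * real M + 1)) / (2 * real (snd p) + 1)) ^ CARD('k)) \<longlongrightarrow> 1) (sequentially \<times>\<^sub>F sequentially)"
      by (rule filterlim_compose[OF lim_ratio1 filterlim_snd])
    have l2: "((\<lambda>p::nat\<times>nat. (real (fst p) + real m + 1) / (real (fst p) + 1)) \<longlongrightarrow> 1) (sequentially \<times>\<^sub>F sequentially)"
      by (rule filterlim_compose[OF lim_ratio2 filterlim_fst])
    have "((\<lambda>p. a p0 * \<rho> p) \<longlongrightarrow> a p0 * (1 * 1)) (sequentially \<times>\<^sub>F sequentially)"
      unfolding \<rho>_def by (intro tendsto_mult tendsto_const l1 l2)
    then have "eventually (\<lambda>p. a p0 * \<rho> p < y) (sequentially \<times>\<^sub>F sequentially)"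
      using p0 by (simp add: order_tendsto_iff)
    moreover have "a p \<le> a p0 * \<rho> p" for p
      unfolding a_def \<rho>_def pm using aa_tile[OF e, of "fst p" "snd p" m M] by simp
    ultimately show "eventually (\<lambda>p. a p < y) (sequentially \<times>\<^sub>F sequentially)"
      by (elim eventually_mono) (meson le_less_trans)
  qed
  then show ?thesis unfolding a_def .
qed

lemma aa_space_lim:
  assumes e: "\<epsilon> > 0"
  shows "((\<lambda>N. aa \<epsilon> 0 N) \<longlongrightarrow> (INF N. aa \<epsilon> 0 N)) sequentially"
proof -
  define a where "a = (\<lambda>N. aa \<epsilon> 0 N)"
  have bdd: "bdd_below (range a)" using aa_nonneg[OF e] unfolding a_def by (intro bdd_belowI[of _ 0]) auto
  have "(a \<longlongrightarrow> (INF p. a p)) sequentially"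
  proof (rule order_tendstoI)
    fix y assume "y < (INF p. a p)"
    then have "\<forall>p. y < a p" using cINF_lower[OF bdd] by (meson UNIV_I less_le_trans)
    then show "eventually (\<lambda>p. y < a p) sequentially" by (intro always_eventually) blast
  next
    fix y assume y: "(INF p. a p) < y"
    then obtain M where p0: "a M < y" using cINF_less_iff[OF UNIV_not_empty bdd] by auto
    define \<rho> where "\<rho> = (\<lambda>N::nat. ((2 * real N + 3 * (2 * real M + 1)) / (2 * real N + 1)) ^ CARD('k))"
    have "((\<lambda>N. a M * \<rho> N) \<longlongrightarrow> a M * 1) sequentially"
      unfolding \<rho>_def by (intro tendsto_mult tendsto_const lim_ratio1)
    then have "eventually (\<lambda>N. a M * \<rho> N < y) sequentially"
      using p0 by (simp add: order_tendsto_iff)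
    moreover have "a N \<le> a M * \<rho> N" for N
      unfolding a_def \<rho>_def using aa_tile[OF e, of 0 N 0 M] by simp
    ultimately show "eventually (\<lambda>N. a N < y) sequentially"
      by (elim eventually_mono) (meson le_less_trans)
  qed
  then show ?thesis unfolding a_def .
qed

end


context sys begin

lemma nontriv_prod: "sequentially \<times>\<^sub>F sequentially \<noteq> (bot :: (nat \<times> nat) filter)"
  by (simp add: prod_filter_eq_bot)

lemma S_joint_eq:
  assumes e: "\<epsilon> > 0"
  shows "S_joint X T f \<epsilon> = (INF p. aa \<epsilon> (fst p) (snd p))"
proof -
  have "(\<lambda>(n, N). ln (real (cov_num X (dyn_dist T f N n) \<epsilon>)) / ((real n + 1) * (2 * real N + 1) ^ CARD('k)))
        = (\<lambda>p. aa \<epsilon> (fst p) (snd p))"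
    by (auto simp: aa_def dyn_dist_DD)
  then show ?thesis unfolding S_joint_def
    using tendsto_Lim[OF nontriv_prod aa_joint_lim[OF e]] by simp
qed

lemma S_act_lim:
  assumes e: "\<epsilon> > 0"
  shows "((\<lambda>N. aa \<epsilon> 0 N) \<longlongrightarrow> S_act X T \<epsilon>) sequentially"
    and "S_act X T \<epsilon> = (INF N. aa \<epsilon> 0 N)"
proof -
  have "(\<lambda>N. ln (real (cov_num X (orbit_dist T N) \<epsilon>)) / (2 * real N + 1) ^ CARD('k)) = (\<lambda>N. aa \<epsilon> 0 N)"
    by (auto simp: aa_def orbit_dist_DD[of T N f for N])
  then show "S_act X T \<epsilon> = (INF N. aa \<epsilon> 0 N)" unfolding S_act_def
    using limI[OF aa_space_lim[OF e]] by simp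
  then show "((\<lambda>N. aa \<epsilon> 0 N) \<longlongrightarrow> S_act X T \<epsilon>) sequentially" using aa_space_lim[OF e] by simp
qed

lemma S_act_nonneg: "\<epsilon> > 0 \<Longrightarrow> 0 \<le> S_act X T \<epsilon>"
  using S_act_lim(2) aa_nonneg by (simp add: cINF_greatest)

lemma cv_anti:
  assumes "finite F" "F \<noteq> {}" "0 < \<epsilon>1" "\<epsilon>1 \<le> \<epsilon>2"
  shows "cv F \<epsilon>2 \<le> cv F \<epsilon>1"
proof (rule cov_num_mono[OF covers_DD[OF assms(1,2,3)]])
  fix \<delta> assume "\<delta> < \<epsilon>1"
  then show "\<exists>\<delta>'<\<epsilon>2. \<forall>x\<in>X. \<forall>y\<in>X. DD T f F x y \<le> \<delta> \<longrightarrow> DD T f F x y \<le> \<delta>'"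
    using assms(4) by (intro exI[of _ \<delta>]) auto
qed

lemma aa_anti:
  assumes "0 < \<epsilon>1" "\<epsilon>1 \<le> \<epsilon>2"
  shows "aa \<epsilon>2 n N \<le> aa \<epsilon>1 n N"
proof -
  have "cv (bx N n) \<epsilon>2 \<le> cv (bx N n) \<epsilon>1" by (rule cv_anti[OF finite_bx bx_ne assms])
  moreover have "1 \<le> cv (bx N n) \<epsilon>2" using assms by (intro cv_pos[OF finite_bx bx_ne]) auto
  ultimately have "ln (real (cv (bx N n) \<epsilon>2)) \<le> ln (real (cv (bx N n) \<epsilon>1))" by simp
  then show ?thesis unfolding aa_def by (intro divide_right_mono) auto
qed

lemma S_act_anti:
  assumes "0 < \<epsilon>1" "\<epsilon>1 \<le> \<epsilon>2"
  shows "S_act X T \<epsilon>2 \<le> S_act X T \<epsilon>1"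
proof -
  have e2: "0 < \<epsilon>2" using assms by simp
  have "(INF N. aa \<epsilon>2 0 N) \<le> aa \<epsilon>1 0 N" for N
    using aa_nonneg[OF e2] aa_anti[OF assms]
    by (meson bdd_belowI2 cINF_lower order_trans UNIV_I)
  then show ?thesis using S_act_lim(2)[OF e2] S_act_lim(2)[OF assms(1)] by (simp add: cINF_greatest)
qed

lemma S_joint_anti:
  assumes "0 < \<epsilon>1" "\<epsilon>1 \<le> \<epsilon>2"
  shows "S_joint X T f \<epsilon>2 \<le> S_joint X T f \<epsilon>1"
proof -
  have e2: "0 < \<epsilon>2" using assms by simp
  have "(INF p. aa \<epsilon>2 (fst p) (snd p)) \<le> aa \<epsilon>1 (fst p) (snd p)" for p
    using aa_nonneg[OF e2] aa_anti[OF assms]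
    by (meson bdd_belowI2 cINF_lower order_trans UNIV_I)
  then show ?thesis using S_joint_eq[OF e2] S_joint_eq[OF assms(1)] by (simp add: cINF_greatest)
qed

lemma S_joint_le_aa: "\<epsilon> > 0 \<Longrightarrow> S_joint X T f \<epsilon> \<le> aa \<epsilon> n N"
  using S_joint_eq[of \<epsilon>] aa_nonneg[of \<epsilon>]
  by (metis (no_types, lifting) bdd_belowI2 cINF_lower UNIV_I fst_conv snd_conv)

lemma lip_iter:
  assumes x: "x \<in> X" and y: "y \<in> X"
    and lip: "\<forall>a\<in>X. \<forall>b\<in>X. dist a b < \<epsilon>0 \<longrightarrow> dist (f a) (f b) \<le> L' * dist a b"
    and L1: "1 \<le> L'" and d0: "0 \<le> \<delta>" and small: "\<delta> * L' ^ n < \<epsilon>0"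
    and base: "dist (T u x) (T u y) \<le> \<delta>"
  shows "j \<le> n \<Longrightarrow> dist (T u ((f^^j) x)) (T u ((f^^j) y)) \<le> \<delta> * L' ^ j"
proof (induction j)
  case 0 then show ?case using base by simp
next
  case (Suc j)
  then have IH: "dist (T u ((f^^j) x)) (T u ((f^^j) y)) \<le> \<delta> * L' ^ j" by simp
  have "\<delta> * L' ^ j \<le> \<delta> * L' ^ n" using Suc.prems L1 d0 by (intro mult_left_mono power_increasing) auto
  then have lt: "dist (T u ((f^^j) x)) (T u ((f^^j) y)) < \<epsilon>0" using IH small by linarith
  have ax: "T u ((f^^j) x) \<in> X" "T u ((f^^j) y) \<in> X" using Phi_X x y by auto
  have "T u ((f^^Suc j) x) = f (T u ((f^^j) x))" using comm fpX[OF x] by simp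
  moreover have "T u ((f^^Suc j) y) = f (T u ((f^^j) y))" using comm fpX[OF y] by simp
  ultimately have "dist (T u ((f^^Suc j) x)) (T u ((f^^Suc j) y)) \<le> L' * dist (T u ((f^^j) x)) (T u ((f^^j) y))"
    using lip ax lt by simp
  also have "\<dots> \<le> L' * (\<delta> * L' ^ j)" using IH L1 by (intro mult_left_mono) auto
  finally show ?case by (simp add: algebra_simps)
qed

lemma cv_lip:
  assumes lip: "\<forall>a\<in>X. \<forall>b\<in>X. dist a b < \<epsilon>0 \<longrightarrow> dist (f a) (f b) \<le> L' * dist a b"
    and L1: "1 \<le> L'" and e: "0 < \<epsilon>" "\<epsilon> \<le> \<epsilon>0"
  shows "cv (bx N n) \<epsilon> \<le> cv (bx N 0) (\<epsilon> / L' ^ n)"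
proof (rule cov_num_mono[OF covers_DD[OF finite_bx bx_ne]])
  have Lp: "L' ^ n > 0" using L1 by simp
  show "0 < \<epsilon> / L' ^ n" using e Lp by simp
  fix \<delta> assume d: "\<delta> < \<epsilon> / L' ^ n"
  define \<delta>0 where "\<delta>0 = max \<delta> 0"
  have d0: "0 \<le> \<delta>0" "\<delta>0 < \<epsilon> / L' ^ n" using d e Lp by (auto simp: \<delta>0_def)
  then have sm: "\<delta>0 * L' ^ n < \<epsilon>" using Lp by (simp add: pos_less_divide_eq)
  show "\<exists>\<delta>'<\<epsilon>. \<forall>x\<in>X. \<forall>y\<in>X. DD T f (bx N 0) x y \<le> \<delta> \<longrightarrow> DD T f (bx N n) x y \<le> \<delta>'"
  proof (intro exI[of _ "\<delta>0 * L' ^ n"] conjI ballI impI)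
    show "\<delta>0 * L' ^ n < \<epsilon>" by (rule sm)
    fix x y assume x: "x \<in> X" and y: "y \<in> X" and D: "DD T f (bx N 0) x y \<le> \<delta>"
    show "DD T f (bx N n) x y \<le> \<delta>0 * L' ^ n"
    proof (rule DD_le[OF finite_bx bx_ne])
      fix p :: "('k \<Rightarrow> int) \<times> nat" assume p: "p \<in> bx N n"
      obtain u j where pu: "p = (u,j)" by (cases p)
      have uj: "u \<in> cube N" "j \<le> n" using p pu by (auto simp: bx_def)
      have "dist (T u x) (T u y) \<le> \<delta>"
        using DD_ge[OF finite_bx[of N 0] bx_ne[of N 0], of "(u,0)" x y] uj D by (simp add: bx_def)
      then have b: "dist (T u x) (T u y) \<le> \<delta>0" by (simp add: \<delta>0_def)
      have "dist (T u ((f^^j) x)) (T u ((f^^j) y)) \<le> \<delta>0 * L' ^ j"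
        by (rule lip_iter[OF x y lip L1 d0(1) _ b uj(2)]) (use sm e in linarith)
      also have "\<dots> \<le> \<delta>0 * L' ^ n" using uj L1 d0 by (intro mult_left_mono power_increasing) auto
      finally show "dist (T (fst p) ((f^^snd p) x)) (T (fst p) ((f^^snd p) y)) \<le> \<delta>0 * L' ^ n" using pu by simp
    qed
  qed
qed

lemma S_joint_le_S_act:
  assumes lip: "\<forall>a\<in>X. \<forall>b\<in>X. dist a b < \<epsilon>0 \<longrightarrow> dist (f a) (f b) \<le> L' * dist a b"
    and L1: "1 \<le> L'" and e: "0 < \<epsilon>" "\<epsilon> \<le> \<epsilon>0"
  shows "S_joint X T f \<epsilon> \<le> S_act X T (\<epsilon> / L' ^ n) / (real n + 1)"
proof -
  have Lp: "L' ^ n > 0" using L1 by simp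
  have e': "0 < \<epsilon> / L' ^ n" using e Lp by simp
  have "aa \<epsilon> n N \<le> aa (\<epsilon> / L' ^ n) 0 N / (real n + 1)" for N
  proof -
    have "cv (bx N n) \<epsilon> \<le> cv (bx N 0) (\<epsilon> / L' ^ n)" by (rule cv_lip[OF lip L1 e])
    moreover have "1 \<le> cv (bx N n) \<epsilon>" using e by (intro cv_pos[OF finite_bx bx_ne]) auto
    ultimately have "ln (real (cv (bx N n) \<epsilon>)) \<le> ln (real (cv (bx N 0) (\<epsilon> / L' ^ n)))" by simp
    then show ?thesis unfolding aa_def by (simp add: divide_right_mono field_simps)
  qed
  then have "\<forall>N. S_joint X T f \<epsilon> \<le> aa (\<epsilon> / L' ^ n) 0 N / (real n + 1)"
    using S_joint_le_aa[OF e(1)] order_trans by blast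
  moreover have "((\<lambda>N. aa (\<epsilon> / L' ^ n) 0 N / (real n + 1)) \<longlongrightarrow> S_act X T (\<epsilon> / L' ^ n) / (real n + 1)) sequentially"
    by (intro tendsto_divide S_act_lim(1)[OF e'] tendsto_const) auto
  ultimately show ?thesis by (intro LIMSEQ_le_const[of "\<lambda>N. aa (\<epsilon> / L' ^ n) 0 N / (real n + 1)"]) auto
qed

end


lemma anti_tendsto_right:
  fixes \<phi> :: "real \<Rightarrow> ereal"
  assumes anti: "\<And>a b. 0 < a \<Longrightarrow> a \<le> b \<Longrightarrow> \<phi> b \<le> \<phi> a"
  shows "(\<phi> \<longlongrightarrow> (SUP e\<in>{0<..}. \<phi> e)) (at_right 0)"
proof (rule order_tendstoI)
  fix y assume "y < (SUP e\<in>{0<..}. \<phi> e)"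
  then obtain e where e: "e > 0" "y < \<phi> e" by (auto simp: less_SUP_iff)
  show "eventually (\<lambda>x. y < \<phi> x) (at_right 0)"
    unfolding eventually_at_right_field
    using e anti by (intro exI[of _ e]) (auto intro: less_le_trans)
next
  fix y assume y: "(SUP e\<in>{0<..}. \<phi> e) < y"
  show "eventually (\<lambda>x. \<phi> x < y) (at_right 0)"
    unfolding eventually_at_right_field
  proof (intro exI[of _ 1] conjI allI impI)
    fix x :: real assume "0 < x"
    then have "\<phi> x \<le> (SUP e\<in>{0<..}. \<phi> e)" by (intro SUP_upper) auto
    then show "\<phi> x < y" using y by simp
  qed simp
qed

lemma mono_tendsto_right:
  fixes \<phi> :: "real \<Rightarrow> ereal"
  assumes mono: "\<And>a b. 0 < a \<Longrightarrow> a \<le> b \<Longrightarrow> \<phi> a \<le> \<phi> b"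
  shows "(\<phi> \<longlongrightarrow> (INF e\<in>{0<..}. \<phi> e)) (at_right 0)"
proof (rule order_tendstoI)
  fix y assume "(INF e\<in>{0<..}. \<phi> e) < y"
  then obtain e where e: "e > 0" "\<phi> e < y" by (auto simp: INF_less_iff)
  show "eventually (\<lambda>x. \<phi> x < y) (at_right 0)"
    unfolding eventually_at_right_field
  proof (intro exI[of _ e] conjI allI impI)
    fix x :: real assume "0 < x" "x < e"
    then have "\<phi> x \<le> \<phi> e" using mono by simp
    then show "\<phi> x < y" using e(2) by (rule le_less_trans)
  qed (use e in simp)
next
  fix y assume y: "y < (INF e\<in>{0<..}. \<phi> e)"
  show "eventually (\<lambda>x. y < \<phi> x) (at_right 0)"
    unfolding eventually_at_right_field
  proof (intro exI[of _ 1] conjI allI impI)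
    fix x :: real assume "0 < x"
    then have "(INF e\<in>{0<..}. \<phi> e) \<le> \<phi> x" by (intro INF_lower) auto
    then show "y < \<phi> x" using y by simp
  qed simp
qed

lemma local_lip_props:
  fixes X :: "'a::metric_space set"
  assumes C: "\<forall>x\<in>X. \<forall>y\<in>X. dist (f x) (f y) \<le> C * dist x y"
  shows "local_lip X f < \<infinity>"
    and "local_lip X f < ereal L' \<Longrightarrow> \<exists>\<epsilon>0>0. \<forall>a\<in>X. \<forall>b\<in>X. dist a b < \<epsilon>0 \<longrightarrow> dist (f a) (f b) \<le> L' * dist a b"
proof -
  define P where "P = (\<lambda>\<epsilon>::real. {(x, y). x \<in> X \<and> y \<in> X \<and> 0 < dist x y \<and> dist x y < \<epsilon>})"
  define \<phi> where "\<phi> = (\<lambda>\<epsilon>. SUP p \<in> P \<epsilon>. ereal (dist (f (fst p)) (f (snd p)) / dist (fst p) (snd p)))"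
  have mono: "\<phi> a \<le> \<phi> b" if "0 < a" "a \<le> b" for a b
    unfolding \<phi>_def using that by (intro SUP_subset_mono) (auto simp: P_def)
  have eqp: "local_lip X f = Lim (at_right 0) \<phi>"
    unfolding local_lip_def \<phi>_def P_def by simp
  have L: "local_lip X f = (INF e\<in>{0<..}. \<phi> e)"
    unfolding eqp
    by (rule tendsto_Lim[OF trivial_limit_at_right_real mono_tendsto_right]) (use mono in auto)
  have "\<phi> 1 \<le> ereal C"
    unfolding \<phi>_def
  proof (rule SUP_least)
    fix p assume "p \<in> P 1"
    then have p: "fst p \<in> X" "snd p \<in> X" "0 < dist (fst p) (snd p)" by (auto simp: P_def)
    then show "ereal (dist (f (fst p)) (f (snd p)) / dist (fst p) (snd p)) \<le> ereal C"
      using C by (simp add: divide_le_eq)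
  qed
  moreover have "local_lip X f \<le> \<phi> 1" unfolding L by (intro INF_lower) auto
  ultimately have "local_lip X f \<le> ereal C" by (rule order_trans[rotated])
  then show "local_lip X f < \<infinity>" by (rule le_less_trans) simp
  assume "local_lip X f < ereal L'"
  then obtain e where e: "e > 0" "\<phi> e < ereal L'" unfolding L by (auto simp: INF_less_iff)
  show "\<exists>\<epsilon>0>0. \<forall>a\<in>X. \<forall>b\<in>X. dist a b < \<epsilon>0 \<longrightarrow> dist (f a) (f b) \<le> L' * dist a b"
  proof (intro exI[of _ e] conjI ballI impI)
    fix a b assume ab: "a \<in> X" "b \<in> X" "dist a b < e"
    show "dist (f a) (f b) \<le> L' * dist a b"
    proof (cases "dist a b = 0")
      case True then show ?thesis by simp
    next
      case False
      then have "(a, b) \<in> P e" using ab by (auto simp: P_def)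
      then have "ereal (dist (f a) (f b) / dist a b) \<le> \<phi> e" unfolding \<phi>_def
        using SUP_upper[of "(a,b)" "P e" "\<lambda>p. ereal (dist (f (fst p)) (f (snd p)) / dist (fst p) (snd p))"] by simp
      then have "ereal (dist (f a) (f b) / dist a b) < ereal L'" using e(2) by (rule le_less_trans)
      then have "dist (f a) (f b) / dist a b < L'" by simp
      then show ?thesis using False by (simp add: divide_less_eq less_imp_le)
    qed
  qed (use e in simp)
qed

context sys begin

lemma mdim_nonneg: "0 \<le> lower_mdim X T"
  unfolding lower_mdim_def
proof (rule Liminf_bounded)
  show "eventually (\<lambda>\<epsilon>. 0 \<le> ereal (S_act X T \<epsilon> / ln (1 / \<epsilon>))) (at_right 0)"
    unfolding eventually_at_right_field
  proof (intro exI[of _ 1] conjI allI impI)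
    fix x :: real assume "0 < x" "x < 1"
    then show "0 \<le> ereal (S_act X T x / ln (1 / x))" using S_act_nonneg[of x] by simp
  qed simp
qed

lemma mdim_freq:
  assumes "lower_mdim X T < ereal m'"
  shows "\<exists>\<^sub>F \<epsilon> in at_right 0. ereal (S_act X T \<epsilon> / ln (1 / \<epsilon>)) < ereal m'"
proof (rule ccontr)
  assume "\<not> ?thesis"
  then have "eventually (\<lambda>\<epsilon>. ereal m' \<le> ereal (S_act X T \<epsilon> / ln (1 / \<epsilon>))) (at_right 0)"
    unfolding not_frequently by (simp add: not_less)
  then have "ereal m' \<le> lower_mdim X T" unfolding lower_mdim_def by (rule Liminf_bounded)
  then show False using assms by simp
qed

lemma S_joint_bound:
  assumes lip: "\<forall>a\<in>X. \<forall>b\<in>X. dist a b < \<epsilon>0 \<longrightarrow> dist (f a) (f b) \<le> L' * dist a b"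
    and L1: "1 < L'" and e: "0 < \<epsilon>" "\<epsilon> \<le> \<epsilon>0" "\<epsilon> < 1" and md: "lower_mdim X T < ereal m'"
  shows "S_joint X T f \<epsilon> \<le> m' * ln L'"
proof (rule field_le_epsilon)
  fix \<eta> :: real assume eta: "0 < \<eta>"
  define c where "c = ln L'"
  have c: "c > 0" using L1 by (simp add: c_def)
  have le1: "0 < ln (1/\<epsilon>)" using e by simp
  obtain K :: nat where K: "max 1 (m' * ln (1/\<epsilon>) / \<eta>) < real K" using reals_Archimedean2 by blast
  define \<epsilon>1 where "\<epsilon>1 = \<epsilon> / L' ^ K"
  have LK: "L' ^ K > 0" using L1 by simp
  have e1: "0 < \<epsilon>1" using e LK by (simp add: \<epsilon>1_def)
  have ev: "eventually (\<lambda>\<delta>. 0 < \<delta> \<and> \<delta> < \<epsilon>1) (at_right 0)"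
    unfolding eventually_at_right_field using e1 by blast
  obtain \<delta> where d: "ereal (S_act X T \<delta> / ln (1 / \<delta>)) < ereal m'" "0 < \<delta>" "\<delta> < \<epsilon>1"
    using frequently_ex[OF frequently_eventually_frequently[OF mdim_freq[OF md] ev]] by blast
  have "1 \<le> L' ^ K" using L1 by simp
  then have "\<epsilon>1 \<le> \<epsilon>" unfolding \<epsilon>1_def using e by (simp add: divide_le_eq mult_le_cancel_left1 )
  then have d1: "\<delta> < 1" using d e by linarith
  have lnd: "0 < ln (1/\<delta>)" using d1 d(2) by simp
  have Sd: "S_act X T \<delta> < m' * ln (1/\<delta>)" using d(1) lnd by (simp add: divide_less_eq)
  have m'pos: "0 < m'"
  proof (rule ccontr)
    assume "\<not> 0 < m'"
    then have "m' * ln (1/\<delta>) \<le> 0" using lnd by (simp add: mult_nonpos_nonneg)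
    then show False using Sd S_act_nonneg[OF d(2)] by linarith
  qed
  have ed: "ln (1/\<delta>) = ln (\<epsilon>/\<delta>) + ln (1/\<epsilon>)" using d(2) e(1) by (simp add: ln_div)
  have "L' ^ K < \<epsilon> / \<delta>" using d(2,3) LK unfolding \<epsilon>1_def by (simp add: field_simps)
  then have "ln (L' ^ K) < ln (\<epsilon> / \<delta>)" using LK by simp
  then have Kc: "real K * c < ln (\<epsilon> / \<delta>)" using L1 by (simp add: ln_realpow c_def)
  define q where "q = ln (\<epsilon> / \<delta>) / c"
  have qK: "real K < q" using Kc c by (simp add: q_def pos_less_divide_eq)
  define n where "n = nat \<lfloor>q\<rfloor>"
  have q0: "0 \<le> q" using qK by linarith
  have nq: "real n \<le> q" "q < real n + 1" using q0 unfolding n_def by linarith+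
  have "ln (L' ^ n) \<le> ln (\<epsilon> / \<delta>)" using nq c L1 by (simp add: ln_realpow q_def c_def pos_le_divide_eq mult.commute)
  then have "L' ^ n \<le> \<epsilon> / \<delta>" using L1 d(2) e(1) by simp
  then have dn: "\<delta> \<le> \<epsilon> / L' ^ n" using d(2) L1 by (simp add: field_simps)
  have lnn: "ln (\<epsilon> / \<delta>) < (real n + 1) * c" using nq c by (simp add: q_def divide_less_eq)
  have Kn: "real K < real n + 1" using qK nq by linarith
  have "S_joint X T f \<epsilon> \<le> S_act X T (\<epsilon> / L' ^ n) / (real n + 1)"
    using S_joint_le_S_act[OF lip _ e(1,2)] L1 by simp
  also have "\<dots> \<le> S_act X T \<delta> / (real n + 1)"
    using S_act_anti[OF d(2) dn] by (simp add: divide_right_mono)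
  also have "\<dots> \<le> m' * ln (1/\<delta>) / (real n + 1)"
    using Sd by (simp add: divide_right_mono)
  also have "\<dots> \<le> m' * ((real n + 1) * c + ln (1/\<epsilon>)) / (real n + 1)"
    using lnn m'pos ed by (intro divide_right_mono mult_left_mono) auto
  also have "\<dots> = m' * c + m' * ln (1/\<epsilon>) / (real n + 1)"
    by (simp add: field_simps)
  also have "\<dots> \<le> m' * c + m' * ln (1/\<epsilon>) / real K"
    using Kn K m'pos le1 by (intro add_left_mono divide_left_mono) auto
  also have "\<dots> < m' * c + \<eta>"
  proof -
    have "m' * ln (1/\<epsilon>) / \<eta> < real K" using K by simp
    then have "m' * ln (1/\<epsilon>) < \<eta> * real K" using eta by (simp add: divide_less_eq mult.commute)
    then have "m' * ln (1/\<epsilon>) / real K < \<eta>" using K by (simp add: divide_less_eq)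
    then show ?thesis by simp
  qed
  finally show "S_joint X T f \<epsilon> \<le> m' * ln L' + \<eta>" by (simp add: c_def)
qed

lemma htop_bound:
  assumes lip: "\<forall>a\<in>X. \<forall>b\<in>X. dist a b < \<epsilon>0 \<longrightarrow> dist (f a) (f b) \<le> L' * dist a b"
    and e0: "0 < \<epsilon>0" and L1: "1 < L'" and md: "lower_mdim X T < ereal m'"
  shows "htop X T f \<le> ereal (m' * ln L')"
proof -
  have anti: "ereal (S_joint X T f b) \<le> ereal (S_joint X T f a)" if "0 < a" "a \<le> b" for a b
    using S_joint_anti[OF that] by simp
  have h: "htop X T f = (SUP e\<in>{0<..}. ereal (S_joint X T f e))"
    unfolding htop_def by (rule tendsto_Lim[OF trivial_limit_at_right_real anti_tendsto_right]) (use anti in auto)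
  show ?thesis unfolding h
  proof (rule SUP_least)
    fix e :: real assume "e \<in> {0<..}"
    then have e: "0 < e" by simp
    define e2 where "e2 = min e (min \<epsilon>0 (1/2))"
    have e2: "0 < e2" "e2 \<le> e" "e2 \<le> \<epsilon>0" "e2 < 1" using e e0 by (auto simp: e2_def)
    have "S_joint X T f e \<le> S_joint X T f e2" by (rule S_joint_anti[OF e2(1,2)])
    also have "\<dots> \<le> m' * ln L'" by (rule S_joint_bound[OF lip L1 e2(1,3,4) md])
    finally show "ereal (S_joint X T f e) \<le> ereal (m' * ln L')" by simp
  qed
qed

end


lemma cov_num_empty: "cov_num {} \<rho> \<epsilon> = 0"
proof -
  have "{} \<in> covers {} \<rho> \<epsilon>" by (simp add: covers_def)
  then show ?thesis using cov_num_le[of "{}" "{}" \<rho> \<epsilon>] by simp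
qed

lemma empty_case:
  fixes T :: "('k::finite \<Rightarrow> int) \<Rightarrow> 'a::metric_space \<Rightarrow> 'a" and f :: "'a \<Rightarrow> 'a"
  shows "htop {} T f \<le> log_plus (local_lip {} f) * lower_mdim {} T"
proof -
  have Sa: "S_act {} T \<epsilon> = 0" for \<epsilon>
    unfolding S_act_def cov_num_empty by (simp add: limI)
  have lm: "lower_mdim {} T = 0"
    unfolding lower_mdim_def Sa by (simp add: Liminf_const)
  have Sj: "S_joint {} T f \<epsilon> = 0" for \<epsilon>
  proof -
    have "(\<lambda>(n::nat, N::nat). ln (real (cov_num {} (dyn_dist T f N n) \<epsilon>)) / ((real n + 1) * (2 * real N + 1) ^ CARD('k))) = (\<lambda>_. 0)"
      by (auto simp: cov_num_empty)
    then show ?thesis unfolding S_joint_def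
      by (simp add: tendsto_Lim[OF _ tendsto_const] prod_filter_eq_bot)
  qed
  have "htop {} T f = 0"
    unfolding htop_def Sj by (simp add: tendsto_Lim[OF _ tendsto_const])
  then show ?thesis using lm by (simp add: zero_ereal_def[symmetric])
qed

theorem proposition4p5:
  fixes X :: "'a::metric_space set"
    and T :: "('k::finite \<Rightarrow> int) \<Rightarrow> 'a \<Rightarrow> 'a"
    and f :: "'a \<Rightarrow> 'a"
  assumes "compact X"
    and "is_Zk_action X T"
    and "lower_mdim X T < \<infinity>"
    and "f ` X \<subseteq> X"
    and "continuous_on X f"
    and "\<forall>u. \<forall>x\<in>X. f (T u x) = T u (f x)"
    and "\<exists>C. \<forall>x\<in>X. \<forall>y\<in>X. dist (f x) (f y) \<le> C * dist x y"
  shows "htop X T f \<le> log_plus (local_lip X f) * lower_mdim X T"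
proof (cases "X = {}")
  case True
  then show ?thesis using empty_case by simp
next
  case False
  interpret sys X T f using assms False by unfold_locales auto
  obtain C where C: "\<forall>x\<in>X. \<forall>y\<in>X. dist (f x) (f y) \<le> C * dist x y" using assms(7) by blast
  define L where "L = local_lip X f"
  have Lfin: "L < \<infinity>" unfolding L_def by (rule local_lip_props(1)[OF C])
  define m where "m = lower_mdim X T"
  have m0: "0 \<le> m" "m < \<infinity>" using mdim_nonneg assms(3) by (auto simp: m_def)
  then obtain m0 where m0def: "m = ereal m0" and m0pos: "0 \<le> m0" by (cases m) auto
  define l where "l = (if L \<le> 1 then 1 else real_of_ereal L)"
  have l1: "1 \<le> l"
  proof (cases "L \<le> 1")
    case False
    obtain r where r: "L = ereal r" using Lfin False by (cases L) auto
    then show ?thesis using False by (simp add: l_def)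
  qed (simp add: l_def)
  have lp: "log_plus L = ereal (ln l)"
  proof (cases "L \<le> 1")
    case False
    then show ?thesis using Lfin by (simp add: log_plus_def l_def)
  qed (simp add: log_plus_def l_def)
  have Ll: "L < ereal L'" if "l < L'" for L'
  proof (cases "L \<le> 1")
    case True
    then show ?thesis using that l1 by (metis ereal_less_eq(3) le_less_trans order.strict_trans1 ereal_less(3) one_ereal_def ereal_le_real_iff less_imp_le not_le) 
  next
    case False
    then have "L = ereal l" using Lfin by (cases L) (auto simp: l_def)
    then show ?thesis using that by simp
  qed
  have bound: "htop X T f \<le> ereal ((m0 + t) * ln (l + t))" if t: "0 < t" for t
  proof -
    have "L < ereal (l + t)" using Ll t by simp
    then obtain \<epsilon>0 where e0: "\<epsilon>0 > 0" "\<forall>a\<in>X. \<forall>b\<in>X. dist a b < \<epsilon>0 \<longrightarrow> dist (f a) (f b) \<le> (l + t) * dist a b"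
      using local_lip_props(2)[OF C] unfolding L_def by blast
    have md: "lower_mdim X T < ereal (m0 + t)" using t m0def by (simp add: m_def)
    show ?thesis by (rule htop_bound[OF e0(2) e0(1) _ md]) (use l1 t in simp)
  qed
  have lim: "((\<lambda>t. ereal ((m0 + t) * ln (l + t))) \<longlongrightarrow> ereal ((m0 + 0) * ln (l + 0))) (at_right 0)"
    using l1 by (intro tendsto_ereal tendsto_mult tendsto_add tendsto_ln tendsto_const tendsto_ident_at) auto
  have ev: "eventually (\<lambda>t. htop X T f \<le> ereal ((m0 + t) * ln (l + t))) (at_right 0)"
    unfolding eventually_at_right_field using bound by (intro exI[of _ 1]) auto
  have "htop X T f \<le> ereal ((m0 + 0) * ln (l + 0))"
    by (rule tendsto_le[OF trivial_limit_at_right_real lim tendsto_const ev])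
  then show ?thesis using lp m0def by (simp add: L_def m_def mult.commute)
qed


end
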